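(* In any $\delta$-ring $A$, for every $n\ge1$ and $f\in A$, \[ \delta_n(f)=\sum_{k=0}^{n-1}\theta_{n-k}(\delta_k(f)). \]
   Context: A $\delta$-ring is a commutative ring with $\delta$ such that $\phi(x)=x^p+p\delta(x)$ is a ring endomorphism. The operations $\delta_k$ are the Witt components of the map $A\to W(A)$ encoding the $\delta$-structure, characterized by $\phi^n(f)=\sum_{k=0}^np^k\delta_k(f)^{p^{n-k}}$ for all $n$ (so $\delta_0=\mathrm{id}$, $\delta_1=\delta$). The operations $\theta_n$ ($n\ge1$) are the natural operations characterized by $\phi(f^{p^{n-1}})=f^{p^n}+p^n\theta_n(f)$. *)

theory Defs
  imports Main "HOL-Library.Poly_Mapping" "HOL-Computational_Algebra.Primes"
begin

text \<open>Delta-rings (for a fixed prime p), in the standard (Joyal / Bhatt--Scholze) axiomatisation,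
  valid for arbitrary commutative rings: these axioms say exactly that
  phi(x) = x^p + p * delta(x) is a ring endomorphism, with the division by p in the additivity
  rule performed on the integer coefficients (p divides (p choose i) for 0 < i < p).\<close>

definition delta_ring :: "nat \<Rightarrow> ('a::comm_ring_1 \<Rightarrow> 'a) \<Rightarrow> bool" where
  "delta_ring p \<delta> \<longleftrightarrow>
     \<delta> 0 = 0 \<and> \<delta> 1 = 0 \<and>
     (\<forall>x y. \<delta> (x * y) = x ^ p * \<delta> y + y ^ p * \<delta> x + of_nat p * \<delta> x * \<delta> y) \<and>
     (\<forall>x y. \<delta> (x + y) = \<delta> x + \<delta> y
              - (\<Sum>i\<in>{1..p-1}. of_nat ((p choose i) div p) * x ^ i * y ^ (p - i)))"

definition frobenius :: "nat \<Rightarrow> ('a::comm_ring_1 \<Rightarrow> 'a) \<Rightarrow> 'a \<Rightarrow> 'a" where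
  "frobenius p \<delta> x = x ^ p + of_nat p * \<delta> x"

text \<open>Integer polynomials in countably many variables x_0, x_1, ...
  (x_i stands for delta^i(x) in the free delta-ring on one generator x).\<close>

type_synonym ipoly = "(nat \<Rightarrow>\<^sub>0 nat) \<Rightarrow>\<^sub>0 int"

definition Var :: "nat \<Rightarrow> ipoly" where
  "Var i = Poly_Mapping.single (Poly_Mapping.single i 1) 1"

definition eval_ipoly :: "(nat \<Rightarrow> 'a::comm_ring_1) \<Rightarrow> ipoly \<Rightarrow> 'a" where
  "eval_ipoly a P =
     (\<Sum>m\<in>Poly_Mapping.keys P. of_int (Poly_Mapping.lookup P m) *
        (\<Prod>i\<in>Poly_Mapping.keys m. a i ^ Poly_Mapping.lookup m i))"

definition phi_ipoly :: "nat \<Rightarrow> ipoly \<Rightarrow> ipoly" where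
  "phi_ipoly p P = eval_ipoly (\<lambda>i. Var i ^ p + of_nat p * Var (Suc i)) P"

definition div_ipoly :: "int \<Rightarrow> ipoly \<Rightarrow> ipoly" where
  "div_ipoly c P = Poly_Mapping.map (\<lambda>z. z div c) P"

text \<open>Universal polynomials for delta_0, ..., delta_n, from the ghost identity
  phi^n(x) = sum_(k=0..n) p^k delta_k(x)^(p^(n-k)).\<close>
primrec delta_univ_list :: "nat \<Rightarrow> nat \<Rightarrow> ipoly list" where
  "delta_univ_list p 0 = [Var 0]"
| "delta_univ_list p (Suc n) = delta_univ_list p n @
     [div_ipoly (int p ^ Suc n)
        ((phi_ipoly p ^^ Suc n) (Var 0)
         - (\<Sum>k<Suc n. of_nat (p ^ k) * (delta_univ_list p n ! k) ^ (p ^ (Suc n - k))))]"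

definition delta_univ :: "nat \<Rightarrow> nat \<Rightarrow> ipoly" where
  "delta_univ p k = delta_univ_list p k ! k"

text \<open>Universal polynomial for theta_n, from phi(x^(p^(n-1))) = x^(p^n) + p^n theta_n(x).\<close>
definition theta_univ :: "nat \<Rightarrow> nat \<Rightarrow> ipoly" where
  "theta_univ p n = div_ipoly (int p ^ n)
     (phi_ipoly p (Var 0 ^ (p ^ (n - 1))) - Var 0 ^ (p ^ n))"

definition delta_op :: "nat \<Rightarrow> ('a::comm_ring_1 \<Rightarrow> 'a) \<Rightarrow> nat \<Rightarrow> 'a \<Rightarrow> 'a" where
  "delta_op p \<delta> k f = eval_ipoly (\<lambda>i. (\<delta> ^^ i) f) (delta_univ p k)"

definition theta_op :: "nat \<Rightarrow> ('a::comm_ring_1 \<Rightarrow> 'a) \<Rightarrow> nat \<Rightarrow> 'a \<Rightarrow> 'a" where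
  "theta_op p \<delta> n f = eval_ipoly (\<lambda>i. (\<delta> ^^ i) f) (theta_univ p n)"

end

theory Submission
  imports Defs
begin


definition mon :: "(nat \<Rightarrow> 'a::comm_ring_1) \<Rightarrow> (nat \<Rightarrow>\<^sub>0 nat) \<Rightarrow> 'a" where
  "mon a m = (\<Prod>i\<in>Poly_Mapping.keys m. a i ^ Poly_Mapping.lookup m i)"

lemma mon_superset:
  assumes "finite S" "Poly_Mapping.keys m \<subseteq> S"
  shows "mon a m = (\<Prod>i\<in>S. a i ^ Poly_Mapping.lookup m i)"
  unfolding mon_def
  by (rule prod.mono_neutral_left[OF assms(1) assms(2)])
     (auto simp: in_keys_iff)

lemma mon_add: "mon a (m + n) = mon a m * mon a n"
proof -
  let ?S = "Poly_Mapping.keys m \<union> Poly_Mapping.keys n"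
  have "mon a (m + n) = (\<Prod>i\<in>?S. a i ^ Poly_Mapping.lookup (m+n) i)"
    using keys_add[of m n] by (intro mon_superset) auto
  also have "\<dots> = (\<Prod>i\<in>?S. a i ^ Poly_Mapping.lookup m i) * (\<Prod>i\<in>?S. a i ^ Poly_Mapping.lookup n i)"
    by (simp add: lookup_add power_add prod.distrib)
  also have "\<dots> = mon a m * mon a n"
    by (subst (1 2) mon_superset[of ?S]) auto
  finally show ?thesis .
qed

lemma mon_zero [simp]: "mon a 0 = 1"
  by (simp add: mon_def)

lemma mon_single1 [simp]: "mon a (Poly_Mapping.single i 1) = a i"
proof -
  have "Poly_Mapping.keys (Poly_Mapping.single i (1::nat)) = {i}" by simp
  then show ?thesis unfolding mon_def by simp
qed

lemma eval_superset:
  assumes "finite S" "Poly_Mapping.keys P \<subseteq> S"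
  shows "eval_ipoly a P = (\<Sum>m\<in>S. of_int (Poly_Mapping.lookup P m) * mon a m)"
  unfolding eval_ipoly_def mon_def[symmetric]
  by (rule sum.mono_neutral_left[OF assms(1) assms(2)])
     (auto simp: in_keys_iff)

lemma eval_add: "eval_ipoly a (P + Q) = eval_ipoly a P + eval_ipoly a Q"
proof -
  let ?S = "Poly_Mapping.keys P \<union> Poly_Mapping.keys Q"
  have "eval_ipoly a (P + Q) = (\<Sum>m\<in>?S. of_int (Poly_Mapping.lookup (P+Q) m) * mon a m)"
    using keys_add[of P Q] by (intro eval_superset) auto
  also have "\<dots> = (\<Sum>m\<in>?S. of_int (Poly_Mapping.lookup P m) * mon a m) + (\<Sum>m\<in>?S. of_int (Poly_Mapping.lookup Q m) * mon a m)"
    by (simp add: lookup_add distrib_right sum.distrib)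
  also have "\<dots> = eval_ipoly a P + eval_ipoly a Q"
    by (subst (1 2) eval_superset[of ?S]) auto
  finally show ?thesis .
qed

lemma eval_zero [simp]: "eval_ipoly a 0 = 0"
  by (simp add: eval_ipoly_def)

lemma eval_uminus: "eval_ipoly a (- P) = - eval_ipoly a P"
proof -
  have "eval_ipoly a P + eval_ipoly a (- P) = 0" using eval_add[of a P "-P"] by simp
  then have "- eval_ipoly a P = eval_ipoly a (- P)" by (simp only: neg_eq_iff_add_eq_0)
  then show ?thesis by simp
qed

lemma eval_diff: "eval_ipoly a (P - Q) = eval_ipoly a P - eval_ipoly a Q"
  using eval_add[of a P "-Q"] eval_uminus[of a Q] by simp

lemma eval_single: "eval_ipoly a (Poly_Mapping.single m c) = of_int c * mon a m"
  by (subst eval_superset[of "{m}"]) auto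

lemma eval_sum: "eval_ipoly a (\<Sum>x\<in>I. F x) = (\<Sum>x\<in>I. eval_ipoly a (F x))"
  by (induction I rule: infinite_finite_induct) (auto simp: eval_add)

lemma pm_expand: "(P :: 'x \<Rightarrow>\<^sub>0 'b::comm_monoid_add) = (\<Sum>m\<in>Poly_Mapping.keys P. Poly_Mapping.single m (Poly_Mapping.lookup P m))"
proof (rule poly_mapping_eqI)
  fix k
  show "Poly_Mapping.lookup P k = Poly_Mapping.lookup (\<Sum>m\<in>Poly_Mapping.keys P. Poly_Mapping.single m (Poly_Mapping.lookup P m)) k"
    by (simp add: lookup_sum lookup_single when_def in_keys_iff)
qed

lemma eval_mult: "eval_ipoly a (P * Q) = eval_ipoly a P * eval_ipoly a Q"
proof -
  let ?KP = "Poly_Mapping.keys P" and ?KQ = "Poly_Mapping.keys Q"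
  have "P * Q = (\<Sum>m\<in>?KP. Poly_Mapping.single m (Poly_Mapping.lookup P m)) * (\<Sum>n\<in>?KQ. Poly_Mapping.single n (Poly_Mapping.lookup Q n))"
    by (subst (1) pm_expand, subst (2) pm_expand) (rule refl)
  also have "\<dots> = (\<Sum>m\<in>?KP. \<Sum>n\<in>?KQ. Poly_Mapping.single (m+n) (Poly_Mapping.lookup P m * Poly_Mapping.lookup Q n))"
    by (simp add: sum_product mult_single)
  finally have "eval_ipoly a (P * Q) = (\<Sum>m\<in>?KP. \<Sum>n\<in>?KQ. (of_int (Poly_Mapping.lookup P m) * mon a m) * (of_int (Poly_Mapping.lookup Q n) * mon a n))"
    by (simp add: eval_sum eval_single mon_add mult_ac)
  also have "\<dots> = eval_ipoly a P * eval_ipoly a Q"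
    by (simp add: sum_product eval_ipoly_def mon_def)
  finally show ?thesis .
qed

lemma eval_of_int [simp]: "eval_ipoly a (of_int c) = of_int c"
proof -
  have "Poly_Mapping.single (0::nat \<Rightarrow>\<^sub>0 nat) (of_int c :: int) = of_int c" by (rule single_of_int)
  then have "(of_int c :: ipoly) = Poly_Mapping.single 0 c" by simp
  then show ?thesis using eval_single[of a 0 c] by simp
qed

lemma eval_one [simp]: "eval_ipoly a 1 = 1"
  using eval_of_int[of a 1] by simp

lemma eval_of_nat [simp]: "eval_ipoly a (of_nat c) = of_nat c"
  using eval_of_int[of a "int c"] by simp

lemma eval_power: "eval_ipoly a (P ^ k) = eval_ipoly a P ^ k"
  by (induction k) (auto simp: eval_mult)

lemma eval_prod: "eval_ipoly a (\<Prod>x\<in>I. F x) = (\<Prod>x\<in>I. eval_ipoly a (F x))"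
  by (induction I rule: infinite_finite_induct) (auto simp: eval_mult)

lemma eval_Var [simp]: "eval_ipoly a (Var i) = a i"
  unfolding Var_def eval_single mon_single1 by simp

lemmas eval_simps = eval_add eval_diff eval_uminus eval_mult eval_power eval_sum eval_prod

lemma eval_comp: "eval_ipoly b (eval_ipoly Q P) = eval_ipoly (\<lambda>i. eval_ipoly b (Q i)) P"
  unfolding eval_ipoly_def[of _ P] by (simp only: eval_sum eval_mult eval_of_int eval_prod eval_power)



lemma Var_pow: "Var i ^ k = Poly_Mapping.single (Poly_Mapping.single i k) (1::int)"
  by (induction k) (simp_all add: Var_def mult_single single_add[symmetric])

lemma prod_single:
  "(\<Prod>i\<in>K. Poly_Mapping.single (g i) (1::int)) = (Poly_Mapping.single (\<Sum>i\<in>K. g i) 1 :: ipoly)"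
  by (induction K rule: infinite_finite_induct) (simp_all add: mult_single)

lemma mon_Var: "mon Var m = Poly_Mapping.single m 1"
proof -
  have "mon Var m = Poly_Mapping.single (\<Sum>i\<in>Poly_Mapping.keys m. Poly_Mapping.single i (Poly_Mapping.lookup m i)) 1"
    unfolding mon_def Var_pow prod_single ..
  also have "\<dots> = Poly_Mapping.single m 1"
    by (simp only: pm_expand[of m, symmetric])
  finally show ?thesis .
qed

lemma of_int_ipoly: "(of_int c :: ipoly) = Poly_Mapping.single 0 c"
proof -
  have "Poly_Mapping.single (0::nat \<Rightarrow>\<^sub>0 nat) (of_int c :: int) = of_int c" by (rule single_of_int)
  then show ?thesis by simp
qed

lemma single_as_prod: "(Poly_Mapping.single m c :: ipoly) = of_int c * mon Var m"
  by (simp add: mon_Var of_int_ipoly mult_single)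

lemma ipoly_induct:
  assumes Q0: "Q 0" and Q1: "Q 1" and QV: "\<And>i. Q (Var i)"
    and Qadd: "\<And>x y. Q x \<Longrightarrow> Q y \<Longrightarrow> Q (x + y)"
    and Qmult: "\<And>x y. Q x \<Longrightarrow> Q y \<Longrightarrow> Q (x * y)"
    and Qdiff: "\<And>x y. Q x \<Longrightarrow> Q y \<Longrightarrow> Q (x - y)"
  shows "Q (P :: ipoly)"
proof -
  have nat: "Q (of_nat n)" for n
    by (induction n) (simp_all add: Q0 Qadd Q1)
  have int: "Q (of_int c)" for c
  proof (cases c rule: int_cases)
    case (nonneg n) then show ?thesis using nat[of n] by simp
  next
    case (neg n) then show ?thesis using Qdiff[OF Q0 nat[of "Suc n"]] by simp
  qed
  have pw: "Q (x ^ k)" if "Q x" for x k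
    using that by (induction k) (simp_all add: Q1 Qmult)
  have pr: "Q (\<Prod>i\<in>K. F i)" if "\<And>i. Q (F i)" for K F
    using that by (induction K rule: infinite_finite_induct) (simp_all add: Q1 Qmult)
  have sm: "Q (\<Sum>i\<in>K. F i)" if "\<And>i. Q (F i)" for K and F :: "_ \<Rightarrow> ipoly"
    using that by (induction K rule: infinite_finite_induct) (simp_all add: Q0 Qadd)
  have mon: "Q (mon Var m)" for m
    unfolding mon_def by (rule pr) (rule pw[OF QV])
  show ?thesis
    apply (subst pm_expand)
    apply (rule sm)
    apply (subst single_as_prod)
    apply (rule Qmult[OF int mon])
    done
qed

lemma div_ipoly_mult:
  assumes "c \<noteq> 0"
  shows "div_ipoly c (of_int c * P) = P"
proof -
  have "of_int c * P = Poly_Mapping.map ((*) c) P"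
    by (simp add: of_int_ipoly mult_map_scale_conv_mult)
  have "div_ipoly c (Poly_Mapping.map ((*) c) P) = P"
  proof (rule poly_mapping_eqI)
    fix k
    show "Poly_Mapping.lookup (div_ipoly c (Poly_Mapping.map ((*) c) P)) k = Poly_Mapping.lookup P k"
      using assms unfolding div_ipoly_def map.rep_eq when_def by auto
  qed
  then show ?thesis by (simp only: \<open>of_int c * P = Poly_Mapping.map ((*) c) P\<close>)
qed

lemma ipoly_cancel:
  assumes "c \<noteq> 0" "of_int c * (X::ipoly) = of_int c * Y"
  shows "X = Y"
  by (metis div_ipoly_mult[OF assms(1)] assms(2))

definition sig :: "nat \<Rightarrow> 'a::comm_ring_1 \<Rightarrow> 'a \<Rightarrow> 'a" where
  "sig p x y = (\<Sum>i\<in>{1..p-1}. of_nat ((p choose i) div p) * x ^ i * y ^ (p - i))"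

lemma binom_sig:
  fixes x y :: "'a::comm_ring_1"
  assumes "prime p"
  shows "(x + y) ^ p = x ^ p + y ^ p + of_nat p * sig p x y"
proof -
  have p2: "p \<ge> 2" using prime_ge_2_nat[OF assms] .
  have set: "{..p} = insert 0 (insert p {1..p-1})" using p2 by auto
  have mid: "(\<Sum>k\<in>{1..p-1}. of_nat (p choose k) * x ^ k * y ^ (p - k)) = of_nat p * sig p x y"
    unfolding sig_def sum_distrib_left
  proof (rule sum.cong[OF refl])
    fix k assume k: "k \<in> {1..p-1}"
    have "p dvd (p choose k)" using k p2 assms by (intro dvd_choose_prime) auto
    then have "(p choose k) = p * ((p choose k) div p)" by simp
    then have "(of_nat (p choose k) :: 'a) = of_nat p * of_nat ((p choose k) div p)"
      by (metis of_nat_mult)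
    then show "of_nat (p choose k) * x ^ k * y ^ (p - k) = of_nat p * (of_nat ((p choose k) div p) * x ^ k * y ^ (p - k))"
      by (simp add: mult_ac)
  qed
  have "(x + y) ^ p = (\<Sum>k\<le>p. of_nat (p choose k) * x ^ k * y ^ (p - k))"
    by (rule binomial_ring)
  also have "\<dots> = y ^ p + x ^ p + (\<Sum>k\<in>{1..p-1}. of_nat (p choose k) * x ^ k * y ^ (p - k))"
    using p2 by (subst set) (simp add: sum.insert)
  finally show ?thesis using mid by (simp add: algebra_simps)
qed

lemma sig_factor:
  fixes y b :: "'a::comm_ring_1"
  shows "sig p y b = y * (\<Sum>i\<in>{1..p-1}. of_nat ((p choose i) div p) * y ^ (i - 1) * b ^ (p - i))"
  unfolding sig_def sum_distrib_left
proof (rule sum.cong[OF refl])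
  fix i assume "i \<in> {1..p-1}"
  then have "y ^ i = y * y ^ (i - 1)" by (cases i) auto
  then show "of_nat ((p choose i) div p) * y ^ i * b ^ (p - i) = y * (of_nat ((p choose i) div p) * y ^ (i - 1) * b ^ (p - i))"
    by (simp add: mult_ac)
qed

lemma pow_lift:
  fixes b c :: "'a::comm_ring_1"
  assumes "prime p" "j \<ge> 1"
  shows "\<exists>c'. (b + of_nat p ^ j * c) ^ p = b ^ p + of_nat p ^ Suc j * c'"
proof -
  have p2: "p \<ge> 2" using prime_ge_2_nat[OF assms(1)] .
  define y where "y = of_nat p ^ j * c"
  define T where "T = (\<Sum>i\<in>{1..p-1}. of_nat ((p choose i) div p) * y ^ (i - 1) * b ^ (p - i))"
  have yp: "y ^ p = y ^ 2 * y ^ (p - 2)"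
  proof -
    have "p = 2 + (p - 2)" using p2 by simp
    then show ?thesis by (metis power_add)
  qed
  have y2: "y ^ 2 = of_nat p ^ Suc j * (of_nat p ^ (j - 1) * c ^ 2)"
  proof -
    have "j + j = Suc j + (j - 1)" using assms(2) by simp
    then have "(of_nat p :: 'a) ^ (j + j) = of_nat p ^ Suc j * of_nat p ^ (j - 1)"
      by (metis power_add)
    then show ?thesis unfolding y_def by (simp add: power2_eq_square power_add mult_ac)
  qed
  have "(b + y) ^ p = (y + b) ^ p" by (simp add: add.commute)
  also have "\<dots> = y ^ p + b ^ p + of_nat p * (y * T)"
    using binom_sig[OF assms(1), of y b] sig_factor[of p y b] T_def by simp
  also have "\<dots> = b ^ p + of_nat p ^ Suc j * (of_nat p ^ (j - 1) * c ^ 2 * y ^ (p - 2) + c * T)"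
    unfolding yp y2 by (simp add: y_def algebra_simps)
  finally show ?thesis unfolding y_def by blast
qed

lemma pow_iter:
  fixes b c :: "'a::comm_ring_1"
  assumes "prime p"
  shows "\<exists>c'. (b + of_nat p * c) ^ (p ^ m) = b ^ (p ^ m) + of_nat p ^ Suc m * c'"
proof (induction m)
  case 0 then show ?case by auto
next
  case (Suc m)
  then obtain c' where c': "(b + of_nat p * c) ^ (p ^ m) = b ^ (p ^ m) + of_nat p ^ Suc m * c'" by blast
  obtain c'' where "(b ^ (p ^ m) + of_nat p ^ Suc m * c') ^ p = (b ^ (p ^ m)) ^ p + of_nat p ^ Suc (Suc m) * c''"
    using pow_lift[OF assms, of "Suc m" "b ^ (p ^ m)" c'] by auto
  moreover have "x ^ (p ^ Suc m) = (x ^ (p ^ m)) ^ p" for x :: 'a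
    by (simp add: power_mult[symmetric] mult.commute)
  ultimately have "(b + of_nat p * c) ^ (p ^ Suc m) = b ^ (p ^ Suc m) + of_nat p ^ Suc (Suc m) * c''"
    using c' by metis
  then show ?case by blast
qed



lemma phi_add: "phi_ipoly p (x + y) = phi_ipoly p x + phi_ipoly p y"
  by (simp add: phi_ipoly_def eval_add)
lemma phi_diff: "phi_ipoly p (x - y) = phi_ipoly p x - phi_ipoly p y"
  by (simp add: phi_ipoly_def eval_diff)
lemma phi_mult: "phi_ipoly p (x * y) = phi_ipoly p x * phi_ipoly p y"
  by (simp add: phi_ipoly_def eval_mult)
lemma phi_power: "phi_ipoly p (x ^ k) = phi_ipoly p x ^ k"
  by (simp add: phi_ipoly_def eval_power)
lemma phi_sum: "phi_ipoly p (\<Sum>i\<in>I. F i) = (\<Sum>i\<in>I. phi_ipoly p (F i))"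
  by (simp add: phi_ipoly_def eval_sum)
lemma phi_of_nat [simp]: "phi_ipoly p (of_nat n) = of_nat n"
  by (simp add: phi_ipoly_def)
lemma phi_zero [simp]: "phi_ipoly p 0 = 0"
  by (simp add: phi_ipoly_def)
lemma phi_one [simp]: "phi_ipoly p 1 = 1"
  by (simp add: phi_ipoly_def)
lemma phi_Var: "phi_ipoly p (Var i) = Var i ^ p + of_nat p * Var (Suc i)"
  by (simp add: phi_ipoly_def)

lemma eval_sig: "eval_ipoly a (sig p x y) = sig p (eval_ipoly a x) (eval_ipoly a y)"
  by (simp add: sig_def eval_simps)

lemma dp_exists:
  assumes "prime p"
  shows "\<exists>D. of_nat p * D = phi_ipoly p P - P ^ p"
proof (induction P rule: ipoly_induct)
  case 1
  have "p > 0" using assms prime_gt_0_nat by blast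
  then show ?case by (intro exI[of _ 0]) simp
next
  case 2
  show ?case by (intro exI[of _ 0]) simp
next
  case (3 i)
  show ?case by (intro exI[of _ "Var (Suc i)"]) (simp add: phi_Var)
next
  case (4 x y)
  then obtain Dx Dy where Dx: "phi_ipoly p x = x ^ p + of_nat p * Dx"
    and Dy: "phi_ipoly p y = y ^ p + of_nat p * Dy" by (metis add_diff_cancel_left' diff_add_cancel)
  have "of_nat p * (Dx + Dy - sig p x y) = phi_ipoly p (x + y) - (x + y) ^ p"
    by (simp add: phi_add Dx Dy binom_sig[OF assms, of x y] algebra_simps)
  then show ?case by blast
next
  case (5 x y)
  then obtain Dx Dy where Dx: "phi_ipoly p x = x ^ p + of_nat p * Dx"
    and Dy: "phi_ipoly p y = y ^ p + of_nat p * Dy" by (metis add_diff_cancel_left' diff_add_cancel)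
  have "of_nat p * (x ^ p * Dy + y ^ p * Dx + of_nat p * Dx * Dy) = phi_ipoly p (x * y) - (x * y) ^ p"
    by (simp add: phi_mult Dx Dy algebra_simps power_mult_distrib)
  then show ?case by blast
next
  case (6 x y)
  then obtain Dx Dy where Dx: "phi_ipoly p x = x ^ p + of_nat p * Dx"
    and Dy: "phi_ipoly p y = y ^ p + of_nat p * Dy" by (metis add_diff_cancel_left' diff_add_cancel)
  have b: "x ^ p = (x - y) ^ p + y ^ p + of_nat p * sig p (x - y) y"
    using binom_sig[OF assms, of "x - y" y] by simp
  have "of_nat p * (Dx - Dy + sig p (x - y) y) = phi_ipoly p (x - y) - (x - y) ^ p"
    by (simp add: phi_diff Dx Dy b algebra_simps)
  then show ?case by blast
qed

definition dp :: "nat \<Rightarrow> ipoly \<Rightarrow> ipoly" where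
  "dp p P = div_ipoly (int p) (phi_ipoly p P - P ^ p)"

lemma dp_spec:
  assumes "prime p"
  shows "of_nat p * dp p P = phi_ipoly p P - P ^ p"
proof -
  obtain D where D: "of_nat p * D = phi_ipoly p P - P ^ p" using dp_exists[OF assms] by blast
  have "p \<noteq> 0" using assms by auto
  then have "dp p P = D" unfolding dp_def D[symmetric]
    using div_ipoly_mult[of "int p" D] by simp
  then show ?thesis using D by simp
qed

lemma dp_unique:
  assumes "prime p" "of_nat p * D = phi_ipoly p P - P ^ p"
  shows "dp p P = D"
proof -
  have "p \<noteq> 0" using assms by auto
  have "of_int (int p) * dp p P = of_int (int p) * D" using dp_spec[OF assms(1), of P] assms(2) by simp
  then show ?thesis using ipoly_cancel[of "int p" "dp p P" D] \<open>p \<noteq> 0\<close> by simp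
qed

lemma phi_dp: "prime p \<Longrightarrow> phi_ipoly p P = P ^ p + of_nat p * dp p P"
  using dp_spec[of p P] by simp

lemma dp_add: assumes "prime p" shows "dp p (x + y) = dp p x + dp p y - sig p x y"
  by (rule dp_unique[OF assms])
     (simp add: phi_add phi_dp[OF assms, of x] phi_dp[OF assms, of y] binom_sig[OF assms, of x y] algebra_simps)

lemma dp_mult: assumes "prime p"
  shows "dp p (x * y) = x ^ p * dp p y + y ^ p * dp p x + of_nat p * dp p x * dp p y"
  by (rule dp_unique[OF assms])
     (simp add: phi_mult phi_dp[OF assms, of x] phi_dp[OF assms, of y] algebra_simps power_mult_distrib)

lemma dp_diff: assumes "prime p" shows "dp p (x - y) = dp p x - dp p y + sig p (x - y) y"
proof (rule dp_unique[OF assms])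
  have b: "x ^ p = (x - y) ^ p + y ^ p + of_nat p * sig p (x - y) y"
    using binom_sig[OF assms, of "x - y" y] by simp
  show "of_nat p * (dp p x - dp p y + sig p (x - y) y) = phi_ipoly p (x - y) - (x - y) ^ p"
    by (simp add: phi_diff phi_dp[OF assms, of x] phi_dp[OF assms, of y] b algebra_simps)
qed

lemma dp_Var: assumes "prime p" shows "dp p (Var i) = Var (Suc i)"
  by (rule dp_unique[OF assms]) (simp add: phi_Var)

lemma dp_zero: assumes "prime p" shows "dp p 0 = 0"
  by (rule dp_unique[OF assms]) (use assms prime_gt_0_nat in simp)

lemma dp_one: assumes "prime p" shows "dp p 1 = 0"
  by (rule dp_unique[OF assms]) simp

lemma delta_ring_add:
  assumes "delta_ring p \<delta>"
  shows "\<delta> (x + y) = \<delta> x + \<delta> y - sig p x y"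
  using assms unfolding delta_ring_def sig_def by blast

lemma eval_dp:
  fixes \<delta> :: "'a::comm_ring_1 \<Rightarrow> 'a"
  assumes p: "prime p" and d: "delta_ring p \<delta>" and a: "\<And>i. a (Suc i) = \<delta> (a i)"
  shows "eval_ipoly a (dp p P) = \<delta> (eval_ipoly a P)"
proof (induction P rule: ipoly_induct)
  case 1 then show ?case using d by (simp add: dp_zero[OF p] delta_ring_def)
next
  case 2 then show ?case using d by (simp add: dp_one[OF p] delta_ring_def)
next
  case (3 i) then show ?case by (simp add: dp_Var[OF p] a)
next
  case (4 x y) then show ?case
    by (simp add: dp_add[OF p] eval_add eval_diff eval_sig delta_ring_add[OF d])
next
  case (5 x y)
  have m: "\<delta> (u * v) = u ^ p * \<delta> v + v ^ p * \<delta> u + of_nat p * \<delta> u * \<delta> v" for u v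
    using d unfolding delta_ring_def by blast
  from 5 show ?case
    by (simp add: dp_mult[OF p] eval_add eval_mult eval_power m)
next
  case (6 x y)
  have "\<delta> (eval_ipoly a x) = \<delta> ((eval_ipoly a x - eval_ipoly a y) + eval_ipoly a y)" by simp
  also have "\<dots> = \<delta> (eval_ipoly a x - eval_ipoly a y) + \<delta> (eval_ipoly a y) - sig p (eval_ipoly a x - eval_ipoly a y) (eval_ipoly a y)"
    by (rule delta_ring_add[OF d])
  finally have e: "\<delta> (eval_ipoly a x - eval_ipoly a y) = \<delta> (eval_ipoly a x) - \<delta> (eval_ipoly a y) + sig p (eval_ipoly a x - eval_ipoly a y) (eval_ipoly a y)"
    by (simp add: algebra_simps)
  from 6 show ?case
    by (simp add: dp_diff[OF p] eval_add eval_diff eval_sig e)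
qed

lemma eval_dpow:
  fixes \<delta> :: "'a::comm_ring_1 \<Rightarrow> 'a"
  assumes p: "prime p" and d: "delta_ring p \<delta>" and a: "\<And>i. a (Suc i) = \<delta> (a i)"
  shows "eval_ipoly a ((dp p ^^ i) P) = (\<delta> ^^ i) (eval_ipoly a P)"
  by (induction i) (simp_all add: eval_dp[where a=a, OF p d a])



definition Th :: "nat \<Rightarrow> nat \<Rightarrow> ipoly \<Rightarrow> ipoly" where
  "Th p m Q = eval_ipoly (\<lambda>i. (dp p ^^ i) Q) (theta_univ p m)"

lemma Th_spec:
  assumes p: "prime p" and m: "m \<ge> 1"
  shows "of_nat p ^ m * Th p m Q = phi_ipoly p Q ^ (p ^ (m - 1)) - Q ^ (p ^ m)"
proof -
  define N where "N = p ^ (m - 1)"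
  have e1: "Suc (m - 1) = m" using m by simp
  obtain c where c: "(Var 0 ^ p + of_nat p * Var 1) ^ N = (Var 0 ^ p) ^ N + of_nat p ^ m * c"
    using pow_iter[OF p, of "Var 0 ^ p" "Var 1" "m - 1"] unfolding N_def e1 by blast
  have e2: "p * N = p ^ m" unfolding N_def using m by (metis power_Suc e1)
  have e3: "(x ^ p) ^ N = x ^ (p ^ m)" for x :: "'b::comm_ring_1"
    by (metis power_mult e2)
  have phi0: "phi_ipoly p (Var 0) = Var 0 ^ p + of_nat p * Var 1"
    by (simp add: phi_Var)
  have X: "phi_ipoly p (Var 0 ^ N) - Var 0 ^ (p ^ m) = of_int (int p ^ m) * c"
    unfolding phi_power phi0 c e3 by simp
  have "p \<noteq> 0" using p by auto
  have th: "theta_univ p m = c"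
    unfolding theta_univ_def X[unfolded N_def] using div_ipoly_mult[of "int p ^ m" c] \<open>p \<noteq> 0\<close> by simp
  let ?w = "\<lambda>i. (dp p ^^ i) Q"
  have "of_nat p ^ m * Th p m Q = eval_ipoly ?w (of_nat p ^ m * c)"
    by (simp add: Th_def th eval_mult eval_power)
  also have "of_nat p ^ m * c = (Var 0 ^ p + of_nat p * Var 1) ^ N - Var 0 ^ (p ^ m)"
    unfolding c e3 by simp
  also have "eval_ipoly ?w \<dots> = (Q ^ p + of_nat p * dp p Q) ^ N - Q ^ (p ^ m)"
    by (simp add: eval_simps)
  also have "\<dots> = phi_ipoly p Q ^ N - Q ^ (p ^ m)"
    by (simp add: phi_dp[OF p])
  finally show ?thesis unfolding N_def .
qed

lemma list_len: "length (delta_univ_list p n) = Suc n"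
  by (induction n) simp_all

lemma list_nth: "k \<le> n \<Longrightarrow> delta_univ_list p n ! k = delta_univ p k"
proof (induction n arbitrary: k)
  case 0 then show ?case by (simp add: delta_univ_def)
next
  case (Suc n)
  show ?case
  proof (cases "k = Suc n")
    case True then show ?thesis by (simp add: delta_univ_def)
  next
    case False
    then have "k \<le> n" using Suc.prems by simp
    then show ?thesis using Suc.IH[of k] list_len[of p n] by (simp add: nth_append)
  qed
qed

lemma main:
  assumes p: "prime p"
  shows "(phi_ipoly p ^^ n) (Var 0) = (\<Sum>k\<le>n. of_nat (p ^ k) * delta_univ p k ^ (p ^ (n - k)))
     \<and> (n \<ge> 1 \<longrightarrow> delta_univ p n = (\<Sum>k<n. Th p (n - k) (delta_univ p k)))"
proof (induction n)
  case 0
  then show ?case by (simp add: delta_univ_def)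
next
  case (Suc n)
  let ?d = "delta_univ p"
  have G: "(phi_ipoly p ^^ n) (Var 0) = (\<Sum>k\<le>n. of_nat (p ^ k) * ?d k ^ (p ^ (n - k)))"
    using Suc.IH by blast
  have phiSuc: "(phi_ipoly p ^^ Suc n) (Var 0) = (\<Sum>k\<le>n. of_nat (p ^ k) * phi_ipoly p (?d k) ^ (p ^ (n - k)))"
    by (simp add: G phi_sum phi_mult phi_power)
  have step: "of_nat (p ^ k) * phi_ipoly p (?d k) ^ (p ^ (n - k)) =
      of_nat (p ^ k) * ?d k ^ (p ^ (Suc n - k)) + of_nat p ^ Suc n * Th p (Suc n - k) (?d k)" if "k \<le> n" for k
  proof -
    have "of_nat p ^ (Suc n - k) * Th p (Suc n - k) (?d k) = phi_ipoly p (?d k) ^ (p ^ (n - k)) - ?d k ^ (p ^ (Suc n - k))"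
      using Th_spec[OF p, of "Suc n - k" "?d k"] that by (simp add: Suc_diff_le)
    moreover have "(of_nat (p ^ k) :: ipoly) * of_nat p ^ (Suc n - k) = of_nat p ^ Suc n"
      using that by (simp add: power_add[symmetric])
    ultimately show ?thesis by (metis (no_types, lifting) add_diff_cancel_left' diff_add_cancel mult.assoc distrib_left)
  qed
  have phiS: "(phi_ipoly p ^^ Suc n) (Var 0) = (\<Sum>k\<le>n. of_nat (p ^ k) * ?d k ^ (p ^ (Suc n - k)))
        + of_nat p ^ Suc n * (\<Sum>k\<le>n. Th p (Suc n - k) (?d k))"
  proof -
    have "(\<Sum>k\<le>n. of_nat (p ^ k) * phi_ipoly p (?d k) ^ (p ^ (n - k))) =
        (\<Sum>k\<le>n. of_nat (p ^ k) * ?d k ^ (p ^ (Suc n - k)) + of_nat p ^ Suc n * Th p (Suc n - k) (?d k))"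
      by (rule sum.cong[OF refl], rule step) simp
    then show ?thesis unfolding phiSuc by (simp only: sum.distrib sum_distrib_left)
  qed
  have diff: "(phi_ipoly p ^^ Suc n) (Var 0) - (\<Sum>k<Suc n. of_nat (p ^ k) * (delta_univ_list p n ! k) ^ (p ^ (Suc n - k)))
      = of_int (int p ^ Suc n) * (\<Sum>k\<le>n. Th p (Suc n - k) (?d k))"
  proof -
    have "(\<Sum>k<Suc n. of_nat (p ^ k) * (delta_univ_list p n ! k) ^ (p ^ (Suc n - k)))
        = (\<Sum>k\<le>n. of_nat (p ^ k) * ?d k ^ (p ^ (Suc n - k)))"
      unfolding lessThan_Suc_atMost by (rule sum.cong) (simp_all add: list_nth)
    then show ?thesis unfolding phiS by simp
  qed
  have "p \<noteq> 0" using p by auto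
  have dS: "?d (Suc n) = (\<Sum>k\<le>n. Th p (Suc n - k) (?d k))"
    unfolding delta_univ_def[of p "Suc n"] delta_univ_list.simps(2) nth_append list_len diff
    using \<open>p \<noteq> 0\<close> div_ipoly_mult[of "int p ^ Suc n" "\<Sum>k\<le>n. Th p (Suc n - k) (?d k)"]
    by (simp del: of_int_mult of_int_power power_Suc)
  have "(phi_ipoly p ^^ Suc n) (Var 0) = (\<Sum>k\<le>Suc n. of_nat (p ^ k) * ?d k ^ (p ^ (Suc n - k)))"
  proof -
    have "(\<Sum>k\<le>Suc n. of_nat (p ^ k) * ?d k ^ (p ^ (Suc n - k))) =
        (\<Sum>k\<le>n. of_nat (p ^ k) * ?d k ^ (p ^ (Suc n - k))) + of_nat (p ^ Suc n) * ?d (Suc n) ^ (p ^ (Suc n - Suc n))"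
      by (rule sum.atMost_Suc)
    also have "of_nat (p ^ Suc n) * ?d (Suc n) ^ (p ^ (Suc n - Suc n)) = of_nat p ^ Suc n * (\<Sum>k\<le>n. Th p (Suc n - k) (?d k))"
      unfolding dS by simp
    finally show ?thesis unfolding phiS by (rule sym)
  qed
  moreover have "?d (Suc n) = (\<Sum>k<Suc n. Th p (Suc n - k) (?d k))"
    unfolding dS lessThan_Suc_atMost ..
  ultimately show ?case by blast
qed

lemma eval_Th:
  fixes \<delta> :: "'a::comm_ring_1 \<Rightarrow> 'a"
  assumes p: "prime p" and d: "delta_ring p \<delta>" and a: "\<And>i. a (Suc i) = \<delta> (a i)"
  shows "eval_ipoly a (Th p m Q) = theta_op p \<delta> m (eval_ipoly a Q)"
  unfolding Th_def theta_op_def eval_comp eval_dpow[where a=a, OF p d a] ..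

theorem lemma4p15:
  fixes p :: nat and \<delta> :: "'a::comm_ring_1 \<Rightarrow> 'a" and n :: nat and f :: 'a
  assumes "prime p" and "delta_ring p \<delta>" and "n \<ge> 1"
  shows "delta_op p \<delta> n f = (\<Sum>k=0..n-1. theta_op p \<delta> (n - k) (delta_op p \<delta> k f))"
proof -
  define a where "a = (\<lambda>i. (\<delta> ^^ i) f)"
  have a: "\<And>i. a (Suc i) = \<delta> (a i)" by (simp add: a_def)
  have dop: "delta_op p \<delta> k f = eval_ipoly a (delta_univ p k)" for k
    by (simp add: delta_op_def a_def)
  have set: "{0..n-1} = {..<n}" using assms(3) by auto
  have "delta_univ p n = (\<Sum>k<n. Th p (n - k) (delta_univ p k))"
    using main[OF assms(1), of n] assms(3) by blast
  then have "delta_op p \<delta> n f = (\<Sum>k<n. eval_ipoly a (Th p (n - k) (delta_univ p k)))"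
    by (simp add: dop eval_sum)
  also have "\<dots> = (\<Sum>k<n. theta_op p \<delta> (n - k) (delta_op p \<delta> k f))"
    by (simp add: eval_Th[where a=a, OF assms(1,2) a] dop)
  finally show ?thesis unfolding set .
qed

end
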